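(* Let $A$ be a primitive set of composite numbers, and let $v\in(0,1)$. If $P(a)^{1+v}>a$ for all $a\in A$, then the sets $\mathrm{L}_{ac}$, ranging over pairs $(a,c)$ with $a\in A$ and $c\in C_a^v$, are pairwise disjoint (i.e. $\mathrm{L}_{ac}\cap\mathrm{L}_{a'c'}=\emptyset$ whenever $(a,c)\ne(a',c')$).
   Context: $P(a)$ denotes the largest prime factor of $a>1$, and $a^*=a/P(a)$. For an integer $m>1$, $\mathrm{L}_m=\{bm: b\in\mathbb{N},\ \text{every prime } p\mid b \text{ satisfies } p\ge P(m)\}$. For $a\in A$, $C_a^v=\{c\in\mathbb{N}:\ \text{every prime } p\mid c \text{ satisfies } P(a^* )\le p<P(a^* )^{1/\sqrt v}\}$ (note $1\in C_a^v$). A set is primitive if no member divides another. *)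

theory Defs
  imports Complex_Main "HOL-Computational_Algebra.Primes"
begin

text \<open>Largest prime factor P(a), meaningful for a > 1.\<close>
definition gpf :: "nat \<Rightarrow> nat" where
  "gpf a = Max (prime_factors a)"

definition astar :: "nat \<Rightarrow> nat" where
  "astar a = a div gpf a"

definition Lset :: "nat \<Rightarrow> nat set" where
  "Lset m = {b * m | b. b \<ge> 1 \<and> (\<forall>p. prime p \<and> p dvd b \<longrightarrow> p \<ge> gpf m)}"

definition Cset :: "nat \<Rightarrow> real \<Rightarrow> nat set" where
  "Cset a v = {c. c \<ge> 1 \<and> (\<forall>p. prime p \<and> p dvd c \<longrightarrow>
      gpf (astar a) \<le> p \<and> real p < real (gpf (astar a)) powr (1 / sqrt v))}"

definition primitive_set :: "nat set \<Rightarrow> bool" where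
  "primitive_set A \<longleftrightarrow> (\<forall>a\<in>A. \<forall>b\<in>A. a dvd b \<longrightarrow> a = b)"

definition composite :: "nat \<Rightarrow> bool" where
  "composite n \<longleftrightarrow> n > 1 \<and> \<not> prime n"

end

theory Submission
  imports Defs
begin


lemma gpf_props:
  fixes n :: nat assumes "n > 1"
  shows "prime (gpf n) \<and> gpf n dvd n \<and> (\<forall>p. prime p \<and> p dvd n \<longrightarrow> p \<le> gpf n)"
proof -
  obtain p where p: "prime p" "p dvd n" using prime_factor_nat[of n] assms by auto
  have "p \<in> prime_factors n" using p assms by (simp add: in_prime_factors_iff)
  then have ne: "prime_factors n \<noteq> {}" by blast
  have fin: "finite (prime_factors n)" by simp
  have "gpf n \<in> prime_factors n" unfolding gpf_def using Max_in[OF fin ne] .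
  moreover have "\<forall>p. prime p \<and> p dvd n \<longrightarrow> p \<le> gpf n"
    unfolding gpf_def using fin assms by (auto intro!: Max_ge simp: in_prime_factors_iff)
  ultimately show ?thesis by auto
qed

lemma gpf_eqI:
  fixes n q :: nat assumes "n > 0" "prime q" "q dvd n" "\<forall>p. prime p \<and> p dvd n \<longrightarrow> p \<le> q"
  shows "gpf n = q"
  unfolding gpf_def
  by (rule Max_eqI) (use assms in \<open>auto simp: in_prime_factors_iff\<close>)

lemma real_facts:
  fixes v :: real and q r x :: nat
  assumes v: "0 < v" "v < 1" and q: "q > 1" and rx: "r \<le> x" and xq: "real x < real q powr v"
  shows "real r < real q powr sqrt v" "real q powr sqrt v < real q"
    "real r powr (1 / sqrt v) < real q powr sqrt v"
proof -
  have sv: "0 < sqrt v" "sqrt v < 1" using v by auto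
  have "v \<le> sqrt v"
  proof -
    have "v = sqrt v * sqrt v" using v by simp
    also have "\<dots> \<le> sqrt v * 1" using sv by (intro mult_left_mono) auto
    finally show ?thesis by simp
  qed
  then have "real q powr v \<le> real q powr sqrt v" using q by (intro powr_mono) auto
  moreover have "real r \<le> real x" using rx by simp
  ultimately show "real r < real q powr sqrt v" using xq by linarith
  have "real q powr sqrt v < real q powr 1" using q sv by (intro powr_less_mono) auto
  then show "real q powr sqrt v < real q" using q by simp
  have "real r powr (1 / sqrt v) < (real q powr v) powr (1 / sqrt v)"
    using sv \<open>real r \<le> real x\<close> xq by (intro powr_less_mono2) auto
  also have "\<dots> = real q powr sqrt v" using v by (simp add: powr_powr real_div_sqrt)
  finally show "real r powr (1 / sqrt v) < real q powr sqrt v" .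
qed



definition good :: "real \<Rightarrow> nat \<Rightarrow> nat \<Rightarrow> nat \<Rightarrow> nat \<Rightarrow> nat \<Rightarrow> bool" where
"good sv x q r c b \<longleftrightarrow> prime q \<and> prime r \<and> x > 0 \<and> c > 0 \<and> b > 0 \<and> r dvd x \<and>
  (\<forall>p. prime p \<and> p dvd x \<longrightarrow> p \<le> r) \<and> r < q \<and> real r < real q powr sv \<and>
  (\<forall>p. prime p \<and> p dvd c \<longrightarrow> r \<le> p \<and> p < q \<and> real p < real q powr sv \<and> real p powr sv < real r) \<and>
  (\<forall>p. prime p \<and> p dvd b \<longrightarrow> q \<le> p)"

lemma mult4:
  fixes x q c b p :: nat
  assumes "prime p" "x > 0" "q > 0" "c > 0" "b > 0"
  shows "multiplicity p (x*q*c*b) = multiplicity p x + multiplicity p q + multiplicity p c + multiplicity p b"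
  using assms by (simp add: prime_elem_multiplicity_mult_distrib)

lemma mprime:
  fixes p q :: nat
  assumes "prime p" "prime q"
  shows "multiplicity p q = (if p = q then 1 else 0)"
  using assms by (metis multiplicity_prime not_dvd_imp_multiplicity_0 prime_elem_nat_iff primes_dvd_imp_eq)

lemma m0: fixes p y :: nat shows "\<not> p dvd y \<Longrightarrow> multiplicity p y = 0"
  by (rule not_dvd_imp_multiplicity_0)

lemma core:
  assumes g: "good sv x q r c b" and g': "good sv x' q' r' c' b'"
    and eq: "x*q*c*b = x'*q'*c'*b'"
    and ord: "q < q' \<or> (q = q' \<and> r \<le> r')"
  shows "x*q dvd x'*q' \<or> x'*q' dvd x*q"
proof -
  from g have q: "prime q" and r: "prime r" and x0: "x > 0" and c0: "c > 0" and b0: "b > 0"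
    and rx: "r dvd x" and xle: "\<And>p. prime p \<Longrightarrow> p dvd x \<Longrightarrow> p \<le> r" and rq: "r < q"
    and rQ: "real r < real q powr sv"
    and cp: "\<And>p. prime p \<Longrightarrow> p dvd c \<Longrightarrow> r \<le> p \<and> p < q \<and> real p < real q powr sv \<and> real p powr sv < real r"
    and bp: "\<And>p. prime p \<Longrightarrow> p dvd b \<Longrightarrow> q \<le> p"
    unfolding good_def by auto
  from g' have q': "prime q'" and r': "prime r'" and x0': "x' > 0" and c0': "c' > 0" and b0': "b' > 0"
    and rx': "r' dvd x'" and xle': "\<And>p. prime p \<Longrightarrow> p dvd x' \<Longrightarrow> p \<le> r'" and rq': "r' < q'"
    and rQ': "real r' < real q' powr sv"
    and cp': "\<And>p. prime p \<Longrightarrow> p dvd c' \<Longrightarrow> r' \<le> p \<and> p < q' \<and> real p < real q' powr sv \<and> real p powr sv < real r'"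
    and bp': "\<And>p. prime p \<Longrightarrow> p dvd b' \<Longrightarrow> q' \<le> p"
    unfolding good_def by auto
  have q0: "q > 0" using q prime_gt_0_nat by blast
  have q0': "q' > 0" using q' prime_gt_0_nat by blast
  have M: "multiplicity p x + multiplicity p q + multiplicity p c + multiplicity p b =
           multiplicity p x' + multiplicity p q' + multiplicity p c' + multiplicity p b'" if "prime p" for p
    using mult4[OF that x0 q0 c0 b0] mult4[OF that x0' q0' c0' b0'] eq by simp
  have mx: "multiplicity p x = 0" if "prime p" "p > r" for p using xle[OF that(1)] that by (intro m0) force
  have mx': "multiplicity p x' = 0" if "prime p" "p > r'" for p using xle'[OF that(1)] that by (intro m0) force
  have mc: "multiplicity p c = 0" if "prime p" "p < r \<or> p \<ge> q" for p using cp[OF that(1)] that by (intro m0) force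
  have mc': "multiplicity p c' = 0" if "prime p" "p < r' \<or> p \<ge> q'" for p using cp'[OF that(1)] that by (intro m0) force
  have mb: "multiplicity p b = 0" if "prime p" "p < q" for p using bp[OF that(1)] that by (intro m0) force
  have mb': "multiplicity p b' = 0" if "prime p" "p < q'" for p using bp'[OF that(1)] that by (intro m0) force
  have mxq: "multiplicity p (x*q) = multiplicity p x + multiplicity p q" if "prime p" for p
    using that x0 q0 by (simp add: prime_elem_multiplicity_mult_distrib)
  have mxq': "multiplicity p (x'*q') = multiplicity p x' + multiplicity p q'" if "prime p" for p
    using that x0' q0' by (simp add: prime_elem_multiplicity_mult_distrib)
  show ?thesis
  proof (cases "q < q'")
    case True
    show ?thesis
    proof (cases "q \<le> r'")
      case qr: True
      have "x*q dvd x'"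
      proof (rule multiplicity_le_imp_dvd)
        show "x*q \<noteq> 0" using x0 q0 by simp
        fix p :: nat assume p: "prime p"
        consider "p < q" | "p = q" | "p > q" by linarith
        then show "multiplicity p (x*q) \<le> multiplicity p x'"
        proof cases
          case 1
          then show ?thesis using M[OF p] mxq[OF p] mprime[OF p q] mprime[OF p q'] mb[OF p] mb'[OF p] mc'[OF p] True qr by simp
        next
          case 2
          have "q dvd x'"
          proof (cases "q = r'")
            case True then show ?thesis using rx' by simp
          next
            case False
            have "multiplicity q x' \<ge> 1"
              using M[OF q] mprime[OF q q] mprime[OF q q'] mb'[OF q] mc'[OF q] True qr False by simp
            then show ?thesis using prime_multiplicity_gt_zero_iff[of q x'] q x0' by auto
          qed
          then have "multiplicity q x' \<ge> 1" using prime_multiplicity_gt_zero_iff[of q x'] q x0' by auto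
          then show ?thesis using 2 mxq[OF p] mx[OF q] rq mprime[OF q q] by simp
        next
          case 3
          then show ?thesis using mxq[OF p] mx[OF p] rq mprime[OF p q] by simp
        qed
      qed
      then show ?thesis using dvd_mult2 by blast
    next
      case False
      have "q dvd x'*q'*c'*b'" using eq[symmetric] by simp
      moreover have "\<not> q dvd x'" using xle'[OF q] False by auto
      moreover have "\<not> q dvd q'" using True primes_dvd_imp_eq[OF q q'] by auto
      moreover have "\<not> q dvd b'" using bp'[OF q] True by auto
      ultimately have "q dvd c'" using q by (simp add: prime_dvd_mult_iff)
      then have A: "real q powr sv < real r'" using cp'[OF q] by auto
      have "r' dvd x*q*c*b" using eq rx' by (metis dvd_mult2 mult.assoc dvd_mult_left)
      then have "r' dvd x \<or> r' dvd q \<or> r' dvd c \<or> r' dvd b" using r' by (simp add: prime_dvd_mult_iff)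
      moreover have "\<not> r' dvd q" using False primes_dvd_imp_eq[OF r' q] by auto
      moreover have "\<not> r' dvd b" using bp[OF r'] False by auto
      ultimately have "r' dvd x \<or> r' dvd c" by blast
      then have "real r' < real q powr sv"
      proof
        assume "r' dvd x"
        then have "real r' \<le> real r" using xle[OF r'] by simp
        then show ?thesis using rQ by linarith
      next
        assume "r' dvd c"
        then show ?thesis using cp[OF r'] by blast
      qed
      with A show ?thesis by simp
    qed
  next
    case False
    with ord have qq: "q = q'" and rr: "r \<le> r'" by auto
    have eqlow: "multiplicity p x = multiplicity p x'" if p: "prime p" "p < r" for p
      using M[OF p(1)] mprime[OF p(1) q] mprime[OF p(1) q'] mb[OF p(1)] mb'[OF p(1)] mc[OF p(1)] mc'[OF p(1)] qq rr rq p(2) by simp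
    show ?thesis
    proof (cases "r < r' \<or> multiplicity r x \<le> multiplicity r x'")
      case True
      have "x dvd x'"
      proof (rule multiplicity_le_imp_dvd)
        show "x \<noteq> 0" using x0 by simp
        fix p :: nat assume p: "prime p"
        consider "p < r" | "p = r" | "p > r" by linarith
        then show "multiplicity p x \<le> multiplicity p x'"
        proof cases
          case 1 then show ?thesis using eqlow p by simp
        next
          case 2
          show ?thesis
          proof (cases "r < r'")
            case True
            then show ?thesis using 2 M[OF r] mprime[OF r q] mprime[OF r q'] mb[OF r] mb'[OF r] mc'[OF r] qq rq by simp
          next
            case False then show ?thesis using \<open>r < r' \<or> _\<close> 2 by auto
          qed
        next
          case 3 then show ?thesis using mx p by simp
        qed
      qed
      then show ?thesis using qq by (simp add: mult_dvd_mono)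
    next
      case False
      then have rr': "r = r'" and le: "multiplicity r x' \<le> multiplicity r x" using rr by auto
      have "x' dvd x"
      proof (rule multiplicity_le_imp_dvd)
        show "x' \<noteq> 0" using x0' by simp
        fix p :: nat assume p: "prime p"
        consider "p < r" | "p = r" | "p > r" by linarith
        then show "multiplicity p x' \<le> multiplicity p x"
        proof cases
          case 1 then show ?thesis using eqlow p by simp
        next
          case 2 then show ?thesis using le by simp
        next
          case 3 then show ?thesis using mx' p rr' by simp
        qed
      qed
      then show ?thesis using qq by (simp add: mult_dvd_mono)
    qed
  qed
qed

lemma uniq:
  fixes c b c' b' q :: nat
  assumes "c*b = c'*b'" "c > 0" "b > 0" "c' > 0" "b' > 0"
    "\<And>p. prime p \<Longrightarrow> p dvd c \<Longrightarrow> p < q" "\<And>p. prime p \<Longrightarrow> p dvd c' \<Longrightarrow> p < q"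
    "\<And>p. prime p \<Longrightarrow> p dvd b \<Longrightarrow> q \<le> p" "\<And>p. prime p \<Longrightarrow> p dvd b' \<Longrightarrow> q \<le> p"
  shows "c dvd c'"
proof (rule multiplicity_le_imp_dvd)
  show "c \<noteq> 0" using assms by simp
  fix p :: nat assume p: "prime p"
  have M: "multiplicity p c + multiplicity p b = multiplicity p c' + multiplicity p b'"
  proof -
    have "multiplicity p (c*b) = multiplicity p c + multiplicity p b"
      using assms(2,3) p by (simp add: prime_elem_multiplicity_mult_distrib)
    moreover have "multiplicity p (c'*b') = multiplicity p c' + multiplicity p b'"
      using assms(4,5) p by (simp add: prime_elem_multiplicity_mult_distrib)
    ultimately show ?thesis using assms(1) by simp
  qed
  show "multiplicity p c \<le> multiplicity p c'"
  proof (cases "p < q")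
    case True
    then have "\<not> p dvd b" "\<not> p dvd b'" using assms(8)[of p] assms(9)[of p] p by auto
    then have "multiplicity p b = 0" "multiplicity p b' = 0" by (simp_all add: m0)
    then show ?thesis using M by simp
  next
    case False
    then have "\<not> p dvd c" using assms(6)[of p] p by auto
    then have "multiplicity p c = 0" by (simp add: m0)
    then show ?thesis by simp
  qed
qed



lemma struct:
  fixes a c b :: nat and v :: real
  assumes comp: "composite a" and bound: "real (gpf a) powr (1 + v) > real a"
    and v: "0 < v" "v < 1" and cC: "c \<in> Cset a v"
    and b1: "b \<ge> 1" and bp: "\<forall>p. prime p \<and> p dvd b \<longrightarrow> p \<ge> gpf (a * c)"
  shows "good (sqrt v) (astar a) (gpf a) (gpf (astar a)) c b \<and> a = astar a * gpf a"
proof -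
  define q where "q = gpf a"
  define x where "x = astar a"
  define r where "r = gpf x"
  have a1: "a > 1" and anp: "\<not> prime a" using comp unfolding composite_def by auto
  from gpf_props[OF a1] have q: "prime q" "q dvd a" and ale: "\<And>p. prime p \<Longrightarrow> p dvd a \<Longrightarrow> p \<le> q"
    unfolding q_def by auto
  have q1: "q > 1" using q prime_gt_1_nat by blast
  have ax: "a = x * q" unfolding x_def astar_def q_def[symmetric] using q(2) by simp
  have x0: "x > 0" using ax a1 by (cases x) auto
  have x1: "x > 1"
  proof (rule ccontr)
    assume "\<not> x > 1" then have "x = 1" using x0 by simp
    then show False using ax q anp by simp
  qed
  from gpf_props[OF x1] have r: "prime r" "r dvd x" and xle: "\<And>p. prime p \<Longrightarrow> p dvd x \<Longrightarrow> p \<le> r"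
    unfolding r_def by auto
  have rx: "r \<le> x" using r x0 by (simp add: dvd_imp_le)
  have "real a < real q powr (1 + v)" using bound q_def by simp
  also have "\<dots> = real q * real q powr v" using q1 by (simp add: powr_add)
  finally have "real x * real q < real q * real q powr v" using ax by simp
  then have xq: "real x < real q powr v" using q1 by (simp add: mult.commute)
  note RF = real_facts[OF v q1 rx xq]
  have rq: "r < q"
  proof -
    have "real r < real q" using RF(1) RF(2) by linarith
    then show ?thesis by simp
  qed
  have c0: "c > 0" and cp0: "\<And>p. prime p \<Longrightarrow> p dvd c \<Longrightarrow> r \<le> p \<and> real p < real r powr (1 / sqrt v)"
    using cC unfolding Cset_def r_def x_def by auto
  have sv: "0 < sqrt v" using v by simp
  have cp: "r \<le> p \<and> p < q \<and> real p < real q powr sqrt v \<and> real p powr sqrt v < real r"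
    if p: "prime p" "p dvd c" for p
  proof -
    from cp0[OF p] have rp: "r \<le> p" and pl: "real p < real r powr (1 / sqrt v)" by auto
    have A: "real p < real q powr sqrt v" using pl RF(3) by linarith
    then have "real p < real q" using RF(2) by linarith
    then have B: "p < q" by simp
    have "real p powr sqrt v < (real r powr (1 / sqrt v)) powr sqrt v"
      using pl sv by (intro powr_less_mono2) auto
    also have "\<dots> = real r" using sv r prime_gt_0_nat[OF r(1)] by (simp add: powr_powr)
    finally show ?thesis using rp A B by simp
  qed
  have gac: "gpf (a * c) = q"
  proof (rule gpf_eqI)
    show "a * c > 0" using a1 c0 by simp
    show "prime q" using q by simp
    show "q dvd a * c" using q by simp
    show "\<forall>p. prime p \<and> p dvd a * c \<longrightarrow> p \<le> q"
    proof (intro allI impI)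
      fix p assume "prime p \<and> p dvd a * c"
      then have p: "prime p" and "p dvd a \<or> p dvd c" by (auto simp: prime_dvd_mult_iff)
      then show "p \<le> q" using ale[OF p] cp[OF p] by auto
    qed
  qed
  have bq: "\<And>p. prime p \<Longrightarrow> p dvd b \<Longrightarrow> q \<le> p" using bp gac by auto
  have "good (sqrt v) x q r c b"
    unfolding good_def using q r x0 c0 b1 rx xle rq RF(1) cp bq by auto
  then show ?thesis using ax unfolding x_def q_def r_def by simp
qed

theorem lemma3p1:
  fixes A :: "nat set" and v :: real
  assumes "primitive_set A"
    and "\<forall>a\<in>A. composite a"
    and "0 < v" and "v < 1"
    and "\<forall>a\<in>A. real (gpf a) powr (1 + v) > real a"
  shows "\<forall>a\<in>A. \<forall>c\<in>Cset a v. \<forall>a'\<in>A. \<forall>c'\<in>Cset a' v.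
           (a, c) \<noteq> (a', c') \<longrightarrow> Lset (a * c) \<inter> Lset (a' * c') = {}"
proof (intro ballI impI)
  fix a c a' c'
  assume aA: "a \<in> A" and cC: "c \<in> Cset a v" and aA': "a' \<in> A" and cC': "c' \<in> Cset a' v"
    and ne: "(a, c) \<noteq> (a', c')"
  show "Lset (a * c) \<inter> Lset (a' * c') = {}"
  proof (rule ccontr)
    assume "Lset (a * c) \<inter> Lset (a' * c') \<noteq> {}"
    then obtain n where "n \<in> Lset (a * c)" "n \<in> Lset (a' * c')" by blast
    then obtain b b' where n: "n = b * (a * c)" "b \<ge> 1" "\<forall>p. prime p \<and> p dvd b \<longrightarrow> p \<ge> gpf (a * c)"
      and n': "n = b' * (a' * c')" "b' \<ge> 1" "\<forall>p. prime p \<and> p dvd b' \<longrightarrow> p \<ge> gpf (a' * c')"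
      unfolding Lset_def by blast
    define x where "x = astar a"
    define q where "q = gpf a"
    define r where "r = gpf x"
    define x' where "x' = astar a'"
    define q' where "q' = gpf a'"
    define r' where "r' = gpf x'"
    have S: "good (sqrt v) x q r c b" "a = x * q"
      using struct[of a v c b] aA cC n assms unfolding x_def q_def r_def by auto
    have S': "good (sqrt v) x' q' r' c' b'" "a' = x' * q'"
      using struct[of a' v c' b'] aA' cC' n' assms unfolding x'_def q'_def r'_def by auto
    have eq: "x*q*c*b = x'*q'*c'*b'" using n(1) n'(1) S(2) S'(2) by (simp add: ac_simps)
    have "x*q dvd x'*q' \<or> x'*q' dvd x*q"
    proof (cases "q < q' \<or> (q = q' \<and> r \<le> r')")
      case True then show ?thesis using core[OF S(1) S'(1) eq] by blast
    next
      case False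
      then have "q' < q \<or> (q' = q \<and> r' \<le> r)" by auto
      then show ?thesis using core[OF S'(1) S(1) eq[symmetric]] by blast
    qed
    then have "a dvd a' \<or> a' dvd a" using S(2) S'(2) by simp
    then have aa: "a = a'" using assms(1) aA aA' unfolding primitive_set_def by metis
    then have xx: "x = x'" and qq: "q = q'" unfolding x_def x'_def q_def q'_def by simp_all
    have xq0: "x * q > 0" using S(1) unfolding good_def by (simp add: prime_gt_0_nat)
    have "(x*q) * (c*b) = (x*q) * (c'*b')" using eq xx qq by (simp add: ac_simps)
    then have cb: "c*b = c'*b'" using xq0 by simp
    from S(1) have g: "c > 0" "b > 0" "\<And>p. prime p \<Longrightarrow> p dvd c \<Longrightarrow> p < q" "\<And>p. prime p \<Longrightarrow> p dvd b \<Longrightarrow> q \<le> p"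
      unfolding good_def by auto
    from S'(1) have g': "c' > 0" "b' > 0" "\<And>p. prime p \<Longrightarrow> p dvd c' \<Longrightarrow> p < q" "\<And>p. prime p \<Longrightarrow> p dvd b' \<Longrightarrow> q \<le> p"
      unfolding good_def qq by auto
    have "c dvd c'" by (rule uniq[OF cb g(1,2) g'(1,2) g(3) g'(3) g(4) g'(4)])
    moreover have "c' dvd c" by (rule uniq[OF cb[symmetric] g'(1,2) g(1,2) g'(3) g(3) g'(4) g(4)])
    ultimately have "c = c'" by (rule dvd_antisym)
    with aa ne show False by simp
  qed
qed

end
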